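(* Let $E$ be a normed vector space with induced metric $d$, let $V:E\to E$ be a map, and let $S\subset E$ be closed. Suppose that for each $a\in S$ there exist an open neighborhood $\Omega_a$ of $a$ and $K_a>0$ such that $$\limsup_{h\to0^+}\frac{d(x+hV(x),S)-d(x,S)}{h}\le K_a\,d(x,S)\quad\text{for all }x\in\Omega_a.$$ Then $S$ is positively invariant with respect to $V$: every forward solution $\sigma:[0,\delta)\to E$ of $V$ with $\sigma(0)\in S$ satisfies $\sigma(t)\in S$ for all $t\in[0,\delta)$.
   Context: $d(x,S):=\inf_{y\in S}d(x,y)$. A forward solution of $V$ is a continuous curve $\sigma:[0,\delta)\to E$ ($\delta>0$) such that for every $s\in[0,\delta)$, $\|\sigma(s+h)-\sigma(s)-hV(\sigma(s))\|=o(h)$ as $h\to0^+$, i.e. the right derivative of $\sigma$ at $s$ exists and equals $V(\sigma(s))$. *)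

theory Defs
  imports "HOL-Analysis.Analysis"
begin

definition forward_solution :: "('a::real_normed_vector \<Rightarrow> 'a) \<Rightarrow> real \<Rightarrow> (real \<Rightarrow> 'a) \<Rightarrow> bool" where
  "forward_solution V \<delta> \<sigma> \<longleftrightarrow> \<delta> > 0 \<and> continuous_on {0..<\<delta>} \<sigma> \<and>
     (\<forall>s\<in>{0..<\<delta>}. (\<sigma> has_vector_derivative V (\<sigma> s)) (at s within {s..}))"

definition positively_invariant :: "('a::real_normed_vector \<Rightarrow> 'a) \<Rightarrow> 'a set \<Rightarrow> bool" where
  "positively_invariant V S \<longleftrightarrow>
     (\<forall>\<delta> \<sigma>. forward_solution V \<delta> \<sigma> \<and> \<sigma> 0 \<in> S \<longrightarrow> (\<forall>t\<in>{0..<\<delta>}. \<sigma> t \<in> S))"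

end

theory Submission
  imports Defs
begin

lemma dini_zero:
  fixes g :: "real \<Rightarrow> real"
  assumes ab: "a \<le> b" and cont: "continuous_on {a..b} g" and ga: "g a = 0" and K: "K > 0"
    and D: "\<forall>t\<in>{a..<b}. \<forall>c>0. \<exists>d>0. \<forall>h. 0 < h \<and> h < d \<longrightarrow> g (t+h) \<le> g t + (K * g t + c) * h"
  shows "\<forall>t\<in>{a..b}. g t \<le> 0"
proof
  fix t assume t: "t \<in> {a..b}"
  show "g t \<le> 0"
  proof (rule field_le_epsilon)
    fix e :: real assume e: "0 < e"
    define \<eta> where "\<eta> = e / exp (2*K*(b-a))"
    have eta: "\<eta> > 0" using e by (simp add: \<eta>_def)
    define \<phi> where "\<phi> r = \<eta> * exp (2*K*(r-a))" for r
    have phipos: "\<phi> r > 0" for r using eta by (simp add: \<phi>_def)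
    define B where "B = {t\<in>{a..b}. \<forall>r\<in>{a..t}. g r \<le> \<phi> r}"
    define s where "s = Sup B"
    have aB: "a \<in> B" using ga phipos ab by (auto simp: B_def intro: less_imp_le)
    have bdd: "bdd_above B" by (auto simp: B_def bdd_above_def)
    have sab: "a \<le> s" "s \<le> b"
    proof -
      show "a \<le> s" unfolding s_def by (rule cSup_upper[OF aB bdd])
      show "s \<le> b" unfolding s_def by (rule cSup_least) (use aB in \<open>auto simp: B_def\<close>)
    qed
    have below: "g r \<le> \<phi> r" if "a \<le> r" "r < s" for r
    proof -
      have "r < Sup B" using that by (simp add: s_def)
      then obtain u where "u \<in> B" "r < u" using less_cSup_iff[of B r] aB bdd by blast
      then show ?thesis using that by (auto simp: B_def)
    qed
    have gs: "g s \<le> \<phi> s"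
    proof (rule ccontr)
      assume neg: "\<not> g s \<le> \<phi> s"
      then have sa: "s > a" using ga phipos[of a] sab by (cases "s = a") auto
      have cphi: "continuous_on {a..b} (\<lambda>r. g r - \<phi> r)"
        unfolding \<phi>_def by (intro continuous_intros cont)
      moreover have "g s - \<phi> s > 0" using neg by simp
      moreover have "s \<in> {a..b}" using sab by simp
      ultimately obtain d where d0: "d > 0" and d1: "\<forall>r\<in>{a..b}. dist r s < d \<longrightarrow>
          dist (g r - \<phi> r) (g s - \<phi> s) < g s - \<phi> s"
        unfolding continuous_on_iff by blast
      have d2: "\<forall>r\<in>{a..b}. dist r s < d \<longrightarrow> g r - \<phi> r > 0"
      proof (intro ballI impI)
        fix r assume "r \<in> {a..b}" "dist r s < d"
        then have "dist (g r - \<phi> r) (g s - \<phi> s) < g s - \<phi> s" using d1 by blast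
        then show "g r - \<phi> r > 0" by (simp add: dist_real_def abs_less_iff)
      qed
      note d = d0 d2
      define r where "r = max a (s - d/2)"
      have "a \<le> r" "r < s" "dist r s < d" using sa d sab by (auto simp: r_def dist_real_def)
      then show False using d below[of r] sab by auto
    qed
    have sB: "s \<in> B" using below gs sab by (auto simp: B_def) (metis order_le_less)
    have sb: "s = b"
    proof (rule ccontr)
      assume "s \<noteq> b" then have slt: "s < b" using sab by simp
      define c where "c = K * \<phi> s / 2"
      have c: "c > 0" using K phipos[of s] by (simp add: c_def)
      obtain d where d: "d > 0" "\<forall>h. 0 < h \<and> h < d \<longrightarrow> g (s+h) \<le> g s + (K * g s + c) * h"
      proof -
        have "s \<in> {a..<b}" using sab slt by simp
        then show ?thesis using D c that by blast
      qed
      define s' where "s' = s + min d (b - s) / 2"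
      have m: "min d (b - s) > 0" "min d (b - s) \<le> b - s" using d(1) slt by auto
      have s1: "s' > s" using m by (simp add: s'_def)
      have s2: "s' \<le> b" using m unfolding s'_def by (simp add: field_simps)
      have m3: "min d (b - s) \<le> d" by simp
      have s3: "s' < s + d" using d(1) unfolding s'_def by (auto simp: field_simps min_def)
      note s's = s1 s2
      have "s' \<in> B"
        unfolding B_def
      proof (intro CollectI conjI ballI)
        show "s' \<in> {a..b}" using s's sab by auto
        fix r assume r: "r \<in> {a..s'}"
        show "g r \<le> \<phi> r"
        proof (cases "r \<le> s")
          case True then show ?thesis using sB r by (auto simp: B_def)
        next
          case False
          define h where "h = r - s"
          have h: "0 < h" "h < d" using False r s3 by (auto simp: h_def)
          have "g (s + h) \<le> g s + (K * g s + c) * h" using d h by blast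
          then have "g r \<le> g s + (K * g s + c) * h" by (simp add: h_def)
          also have "\<dots> \<le> \<phi> s + (K * \<phi> s + c) * h"
            using gs h K by (intro add_mono mult_right_mono) auto
          also have "\<dots> \<le> \<phi> s * (1 + 2*K*h)"
            using h K phipos[of s] by (simp add: c_def algebra_simps)
          also have "\<dots> \<le> \<phi> s * exp (2*K*h)"
            using phipos[of s] by (intro mult_left_mono) auto
          also have "\<dots> = \<phi> r"
            by (simp add: \<phi>_def h_def mult.assoc exp_add[symmetric] algebra_simps)
          finally show ?thesis .
        qed
      qed
      then have "s' \<le> s" using cSup_upper[OF _ bdd] by (simp add: s_def)
      then show False using s's by simp
    qed
    have "g t \<le> \<phi> t" using sB sb t by (auto simp: B_def)
    also have "\<phi> t \<le> \<eta> * exp (2*K*(b-a))"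
      using t K eta by (auto simp: \<phi>_def intro!: mult_left_mono)
    also have "\<dots> = e" by (simp add: \<eta>_def)
    finally show "g t \<le> 0 + e" by simp
  qed
qed


lemma dini_step:
  fixes \<sigma> :: "real \<Rightarrow> 'a::real_normed_vector"
  assumes der: "(\<sigma> has_vector_derivative V (\<sigma> t)) (at t within {t..})"
    and ls: "Limsup (at_right 0) (\<lambda>h. ereal ((infdist (\<sigma> t + h *\<^sub>R V (\<sigma> t)) S - infdist (\<sigma> t) S) / h))
             \<le> ereal (K * infdist (\<sigma> t) S)"
    and c: "c > 0"
  shows "\<exists>d>0. \<forall>h. 0 < h \<and> h < d \<longrightarrow>
           infdist (\<sigma> (t+h)) S \<le> infdist (\<sigma> t) S + (K * infdist (\<sigma> t) S + c) * h"
proof -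
  define x where "x = \<sigma> t"
  define q where "q = infdist x S"
  have "ereal (K * q) < ereal (K * q + c/2)" using c by simp
  then have "Limsup (at_right 0) (\<lambda>h. ereal ((infdist (x + h *\<^sub>R V x) S - q) / h)) < ereal (K * q + c/2)"
    using ls unfolding x_def q_def by (rule le_less_trans[rotated])
  then have "eventually (\<lambda>h. ereal ((infdist (x + h *\<^sub>R V x) S - q) / h) < ereal (K * q + c/2)) (at_right 0)"
    by (rule Limsup_lessD)
  then obtain d1 where d1: "d1 > 0" "\<forall>h>0. h < d1 \<longrightarrow>
      ereal ((infdist (x + h *\<^sub>R V x) S - q) / h) < ereal (K * q + c/2)"
    unfolding eventually_at_right_field by auto
  have "((\<sigma> has_derivative (\<lambda>u. u *\<^sub>R V x)) (at t within {t..}))"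
    using der by (simp add: has_vector_derivative_def x_def)
  then have "\<forall>e>0. \<exists>d>0. \<forall>y\<in>{t..}. norm (y - t) < d \<longrightarrow>
      norm (\<sigma> y - \<sigma> t - (y - t) *\<^sub>R V x) \<le> e * norm (y - t)"
    unfolding has_derivative_within_alt by blast
  then obtain d2 where d2: "d2 > 0" "\<forall>y\<in>{t..}. norm (y - t) < d2 \<longrightarrow>
      norm (\<sigma> y - \<sigma> t - (y - t) *\<^sub>R V x) \<le> c/2 * norm (y - t)"
    using c by (meson half_gt_zero)
  show ?thesis
  proof (intro exI[of _ "min d1 d2"] conjI allI impI)
    show "min d1 d2 > 0" using d1 d2 by simp
    fix h :: real assume h: "0 < h \<and> h < min d1 d2"
    then have "ereal ((infdist (x + h *\<^sub>R V x) S - q) / h) < ereal (K * q + c/2)" using d1 by auto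
    then have "(infdist (x + h *\<^sub>R V x) S - q) / h < K * q + c/2" by simp
    then have A: "infdist (x + h *\<^sub>R V x) S - q < (K * q + c/2) * h"
      using h by (simp add: pos_divide_less_eq)
    have "t + h \<in> {t..}" "norm (t + h - t) < d2" using h by auto
    then have "norm (\<sigma> (t+h) - \<sigma> t - (t + h - t) *\<^sub>R V x) \<le> c/2 * norm (t + h - t)"
      using d2 by blast
    then have B: "dist (\<sigma> (t+h)) (x + h *\<^sub>R V x) \<le> c/2 * h"
      using h by (simp add: dist_norm x_def algebra_simps)
    have "infdist (\<sigma> (t+h)) S \<le> infdist (x + h *\<^sub>R V x) S + dist (\<sigma> (t+h)) (x + h *\<^sub>R V x)"
      by (rule infdist_triangle)
    also have "\<dots> \<le> q + (K * q + c) * h" using A B by (simp add: algebra_simps)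
    finally show "infdist (\<sigma> (t+h)) S \<le> infdist (\<sigma> t) S + (K * infdist (\<sigma> t) S + c) * h"
      by (simp add: q_def x_def)
  qed
qed

theorem theorem6p6:
  fixes V :: "'a::real_normed_vector \<Rightarrow> 'a" and S :: "'a set"
  assumes "closed S"
    and "\<forall>a\<in>S. \<exists>\<Omega> K. open \<Omega> \<and> a \<in> \<Omega> \<and> K > 0 \<and>
           (\<forall>x\<in>\<Omega>. Limsup (at_right 0)
               (\<lambda>h. ereal ((infdist (x + h *\<^sub>R V x) S - infdist x S) / h))
             \<le> ereal (K * infdist x S))"
  shows "positively_invariant V S"
  unfolding positively_invariant_def
proof (intro allI impI ballI)
  fix \<delta> and \<sigma> :: "real \<Rightarrow> 'a" and t1
  assume H: "forward_solution V \<delta> \<sigma> \<and> \<sigma> 0 \<in> S" and t1: "t1 \<in> {0..<\<delta>}"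
  have cont: "continuous_on {0..<\<delta>} \<sigma>"
    and der: "\<forall>s\<in>{0..<\<delta>}. (\<sigma> has_vector_derivative V (\<sigma> s)) (at s within {s..})"
    and s0: "\<sigma> 0 \<in> S"
    using H by (auto simp: forward_solution_def)
  have Sne: "S \<noteq> {}" using s0 by auto
  show "\<sigma> t1 \<in> S"
  proof (rule ccontr)
    assume nt: "\<sigma> t1 \<notin> S"
    define A where "A = {0..t1} \<inter> \<sigma> -` S"
    have contA: "continuous_on {0..t1} \<sigma>"
      by (rule continuous_on_subset[OF cont]) (use t1 in auto)
    have clA: "closed A" unfolding A_def
      by (rule continuous_closed_preimage[OF contA closed_atLeastAtMost assms(1)])
    have A0: "0 \<in> A" using s0 t1 by (auto simp: A_def)
    have bddA: "bdd_above A" by (auto simp: A_def bdd_above_def)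
    define t0 where "t0 = Sup A"
    have t0A: "t0 \<in> A" unfolding t0_def
      by (rule closed_contains_Sup) (use A0 bddA clA in auto)
    have t0: "0 \<le> t0" "t0 \<le> t1" "\<sigma> t0 \<in> S" using t0A by (auto simp: A_def)
    have t01: "t0 < t1" using t0 nt by (cases "t0 = t1") auto
    obtain \<Omega> K where \<Omega>: "open \<Omega>" "\<sigma> t0 \<in> \<Omega>" "K > 0"
      and LS: "\<forall>x\<in>\<Omega>. Limsup (at_right 0)
               (\<lambda>h. ereal ((infdist (x + h *\<^sub>R V x) S - infdist x S) / h))
             \<le> ereal (K * infdist x S)"
      using assms(2) t0(3) by blast
    obtain e where e: "e > 0" "ball (\<sigma> t0) e \<subseteq> \<Omega>"
      using \<Omega>(1,2) open_contains_ball by blast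
    have t0d: "t0 \<in> {0..<\<delta>}" using t0 t1 by auto
    obtain \<epsilon> where \<epsilon>: "\<epsilon> > 0" "\<forall>x'\<in>{0..<\<delta>}. dist x' t0 < \<epsilon> \<longrightarrow> dist (\<sigma> x') (\<sigma> t0) < e"
      using cont e(1) t0d unfolding continuous_on_iff by blast
    define T where "T = min t1 (t0 + \<epsilon>/2)"
    have T: "t0 < T" "T \<le> t1" "T < t0 + \<epsilon>" using t01 \<epsilon>(1) by (auto simp: T_def)
    have inO: "\<sigma> t \<in> \<Omega>" and tdom: "t \<in> {0..<\<delta>}" if "t \<in> {t0..T}" for t
    proof -
      show td: "t \<in> {0..<\<delta>}" using that T t0 t1 by auto
      have "dist t t0 < \<epsilon>" using that T by (auto simp: dist_real_def)
      then have "dist (\<sigma> t) (\<sigma> t0) < e" using \<epsilon>(2) td by blast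
      then show "\<sigma> t \<in> \<Omega>" using e(2) by (auto simp: dist_commute)
    qed
    define g where "g t = infdist (\<sigma> t) S" for t
    have "\<forall>t\<in>{t0..T}. g t \<le> 0"
    proof (rule dini_zero[where K=K])
      show "t0 \<le> T" using T by simp
      show "continuous_on {t0..T} g" unfolding g_def
        by (intro continuous_on_infdist continuous_on_subset[OF cont]) (use tdom in auto)
      show "g t0 = 0" using t0 by (simp add: g_def)
      show "K > 0" by fact
      show "\<forall>t\<in>{t0..<T}. \<forall>c>0. \<exists>d>0. \<forall>h. 0 < h \<and> h < d \<longrightarrow> g (t+h) \<le> g t + (K * g t + c) * h"
      proof (intro ballI allI impI)
        fix t c :: real assume t: "t \<in> {t0..<T}" and c: "c > 0"
        have tt: "t \<in> {t0..T}" using t by auto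
        show "\<exists>d>0. \<forall>h. 0 < h \<and> h < d \<longrightarrow> g (t+h) \<le> g t + (K * g t + c) * h"
          unfolding g_def
          by (rule dini_step[OF _ _ c]) (use der tdom[OF tt] LS inO[OF tt] in auto)
      qed
    qed
    then have "g T \<le> 0" using T by auto
    then have "infdist (\<sigma> T) S = 0" using infdist_nonneg[of "\<sigma> T" S] by (simp add: g_def)
    then have "\<sigma> T \<in> S" using in_closed_iff_infdist_zero[OF assms(1) Sne] by simp
    then have "T \<in> A" using T t0 by (auto simp: A_def)
    then have "T \<le> t0" unfolding t0_def using bddA by (rule cSup_upper)
    then show False using T by simp
  qed
qed

end
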